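(* Let $p\geq 3$ and put $\lambda=\lambda_p=2\cos(\pi/p)$. Every $G_p$-equivalence class of $\lambda$-BQFs contains either only hyperbolic forms or no hyperbolic forms.
   Context: Let $S=\begin{pmatrix}1&\lambda\\0&1\end{pmatrix}$, $T=\begin{pmatrix}0&-1\\1&0\end{pmatrix}$, and $G_p=\langle S,T\rangle/\{\pm I\}$, acting on $\mathbb{C}\cup\{\infty\}$ by linear fractional transformations. An element $\begin{pmatrix}a&b\\c&d\end{pmatrix}$ is hyperbolic if $|a+d|>2$; a hyperbolic fixed point is a real number fixed by a hyperbolic element of $G_p$. A $\lambda$-BQF is $Q(x,y)=Ax^2+Bxy+Cy^2=[A,B,C]$ with $A,B,C\in\mathbb{Z}[\lambda]$ and positive discriminant $B^2-4AC$. For $M=\begin{pmatrix}a&b\\c&d\end{pmatrix}\in G_p$, $(Q\circ M)(x,y)=Q(ax+by,cx+dy)$; $Q$ and $Q'$ are $G_p$-equivalent if $Q'=Q\circ V$ for some $V\in G_p$. For a hyperbolic fixed point $\alpha$, choose a matrix $\begin{pmatrix}a&b\\c&d\end{pmatrix}$ representing a generator of the stabilizer of $\alpha$ in $G_p$, replaced by its inverse if necessary so that $\alpha=\frac{a-d+\sqrt{D}}{2c}$ with $D=(a+d)^2-4$; then $Q_\alpha=[c,d-a,-b]$. A $\lambda$-BQF is hyperbolic if it equals $Q_\alpha$ for some hyperbolic fixed point $\alpha$. *)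

theory Defs
  imports Complex_Main "HOL-Computational_Algebra.Polynomial"
begin

text \<open>2x2 real matrices (a,b,c,d) = [[a,b],[c,d]].\<close>
type_synonym mat2 = "real \<times> real \<times> real \<times> real"

fun mmul :: "mat2 \<Rightarrow> mat2 \<Rightarrow> mat2" where
  "mmul (a,b,c,d) (a',b',c',d') =
     (a*a' + b*c', a*b' + b*d', c*a' + d*c', c*b' + d*d')"

definition mid :: mat2 where "mid = (1,0,0,1)"

fun mneg :: "mat2 \<Rightarrow> mat2" where
  "mneg (a,b,c,d) = (-a,-b,-c,-d)"

text \<open>Inverse of a determinant-one matrix.\<close>
fun minv :: "mat2 \<Rightarrow> mat2" where
  "minv (a,b,c,d) = (d,-b,-c,a)"

fun mpow_nat :: "mat2 \<Rightarrow> nat \<Rightarrow> mat2" where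
  "mpow_nat M 0 = mid"
| "mpow_nat M (Suc n) = mmul M (mpow_nat M n)"

definition mpow :: "mat2 \<Rightarrow> int \<Rightarrow> mat2" where
  "mpow M k = (if k \<ge> 0 then mpow_nat M (nat k) else mpow_nat (minv M) (nat (- k)))"

definition lam :: "nat \<Rightarrow> real" where
  "lam p = 2 * cos (pi / real p)"

definition matS :: "real \<Rightarrow> mat2" where "matS l = (1, l, 0, 1)"
definition matT :: mat2 where "matT = (0, -1, 1, 0)"

text \<open>The subgroup of SL(2,R) generated by S and T (it contains -I = T^2);
  the Hecke group G_p is its quotient by {+-I}.\<close>
inductive_set hecke :: "real \<Rightarrow> mat2 set" for l :: real where
  hecke_id: "mid \<in> hecke l"
| hecke_S: "M \<in> hecke l \<Longrightarrow> mmul M (matS l) \<in> hecke l"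
| hecke_Sinv: "M \<in> hecke l \<Longrightarrow> mmul M (minv (matS l)) \<in> hecke l"
| hecke_T: "M \<in> hecke l \<Longrightarrow> mmul M matT \<in> hecke l"
| hecke_Tinv: "M \<in> hecke l \<Longrightarrow> mmul M (minv matT) \<in> hecke l"

fun is_hyperbolic :: "mat2 \<Rightarrow> bool" where
  "is_hyperbolic (a,b,c,d) \<longleftrightarrow> \<bar>a + d\<bar> > 2"

text \<open>M fixes the real point x under z \<mapsto> (az+b)/(cz+d). For det M = 1 this is
  equivalent to cx^2 + (d-a)x - b = 0 (the case cx+d = 0 is then impossible).\<close>
fun fixes_pt :: "mat2 \<Rightarrow> real \<Rightarrow> bool" where
  "fixes_pt (a,b,c,d) x \<longleftrightarrow> c*x + d \<noteq> 0 \<and> (a*x + b) / (c*x + d) = x"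

definition hyp_fixed_point :: "real \<Rightarrow> real \<Rightarrow> bool" where
  "hyp_fixed_point l x \<longleftrightarrow> (\<exists>M \<in> hecke l. is_hyperbolic M \<and> fixes_pt M x)"

text \<open>M represents a generator of the stabilizer of x in G_p = hecke/{+-I}.\<close>
definition stab_generator :: "real \<Rightarrow> real \<Rightarrow> mat2 \<Rightarrow> bool" where
  "stab_generator l x M \<longleftrightarrow> M \<in> hecke l \<and> fixes_pt M x \<and>
     (\<forall>N \<in> hecke l. fixes_pt N x \<longrightarrow> (\<exists>k::int. N = mpow M k \<or> N = mneg (mpow M k)))"

definition Zlam :: "real \<Rightarrow> real set" where
  "Zlam l = {x. \<exists>q :: int poly. x = poly (map_poly real_of_int q) l}"

type_synonym bqf = "real \<times> real \<times> real"

fun is_lam_BQF :: "real \<Rightarrow> bqf \<Rightarrow> bool" where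
  "is_lam_BQF l (A,B,C) \<longleftrightarrow> A \<in> Zlam l \<and> B \<in> Zlam l \<and> C \<in> Zlam l \<and> B^2 - 4*A*C > 0"

text \<open>(Q o M)(x,y) = Q(ax+by, cx+dy).\<close>
fun bqf_act :: "bqf \<Rightarrow> mat2 \<Rightarrow> bqf" where
  "bqf_act (A,B,C) (a,b,c,d) =
     (A*a^2 + B*a*c + C*c^2, 2*A*a*b + B*(a*d + b*c) + 2*C*c*d, A*b^2 + B*b*d + C*d^2)"

definition equiv_bqf :: "real \<Rightarrow> bqf \<Rightarrow> bqf \<Rightarrow> bool" where
  "equiv_bqf l Q Q' \<longleftrightarrow> (\<exists>V \<in> hecke l. Q' = bqf_act Q V)"

text \<open>Q = Q_alpha for a hyperbolic fixed point alpha, with M = (a,b,c,d) a generator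
  of the stabilizer normalized so that alpha = (a-d+sqrt D)/(2c).\<close>
definition is_hyp_BQF :: "real \<Rightarrow> bqf \<Rightarrow> bool" where
  "is_hyp_BQF l Q \<longleftrightarrow> is_lam_BQF l Q \<and>
     (\<exists>\<alpha> a b c d. hyp_fixed_point l \<alpha> \<and> stab_generator l \<alpha> (a,b,c,d) \<and> c \<noteq> 0 \<and>
        \<alpha> = (a - d + sqrt ((a+d)^2 - 4)) / (2*c) \<and> Q = (c, d - a, -b))"

end

theory Submission
  imports Defs
begin

lemma mmul_assoc: "mmul (mmul A B) C = mmul A (mmul B C)"
  by (cases A; cases B; cases C) (simp add: algebra_simps)

lemma mmul_mid [simp]: "mmul M mid = M" "mmul mid M = M"
  by (cases M; simp add: mid_def)+

lemma mmul_mneg [simp]: "mmul M (mneg N) = mneg (mmul M N)" "mmul (mneg M) N = mneg (mmul M N)"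
  by (cases M; cases N; simp)+

lemma mneg_mneg [simp]: "mneg (mneg M) = M" by (cases M) simp

lemma minv_minv [simp]: "minv (minv M) = M" by (cases M) simp

lemma minv_mmul: "minv (mmul A B) = mmul (minv B) (minv A)"
  by (cases A; cases B) (simp add: algebra_simps)

lemma minv_mneg [simp]: "minv (mneg A) = mneg (minv A)" by (cases A) simp

fun mdet :: "mat2 \<Rightarrow> real" where "mdet (a,b,c,d) = a*d - b*c"
fun mtr :: "mat2 \<Rightarrow> real" where "mtr (a,b,c,d) = a + d"
fun mc :: "mat2 \<Rightarrow> real" where "mc (a,b,c,d) = c"

lemma mdet_mmul: "mdet (mmul A B) = mdet A * mdet B"
  by (cases A; cases B) (simp add: algebra_simps)

lemma mmul_minv: "mdet M = 1 \<Longrightarrow> mmul M (minv M) = mid"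
  "mdet M = 1 \<Longrightarrow> mmul (minv M) M = mid"
  by (cases M; simp add: mid_def algebra_simps)+

lemma mdet_minv [simp]: "mdet (minv M) = mdet M" by (cases M) (simp add: algebra_simps)
lemma mdet_mneg [simp]: "mdet (mneg M) = mdet M" by (cases M) (simp add: algebra_simps)

lemma hecke_det: "M \<in> hecke l \<Longrightarrow> mdet M = 1"
  by (induction rule: hecke.induct) (auto simp: mdet_mmul mid_def matS_def matT_def)

lemma hecke_mmul: "N \<in> hecke l \<Longrightarrow> M \<in> hecke l \<Longrightarrow> mmul M N \<in> hecke l"
proof (induction N rule: hecke.induct)
  case hecke_id then show ?case by simp
next
  case (hecke_S N) then show ?case using hecke.hecke_S[of "mmul M N" l] by (simp add: mmul_assoc)
next
  case (hecke_Sinv N) then show ?case using hecke.hecke_Sinv[of "mmul M N" l] by (simp add: mmul_assoc)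
next
  case (hecke_T N) then show ?case using hecke.hecke_T[of "mmul M N" l] by (simp add: mmul_assoc)
next
  case (hecke_Tinv N) then show ?case using hecke.hecke_Tinv[of "mmul M N" l] by (simp add: mmul_assoc)
qed

lemma hecke_gens: "matS l \<in> hecke l" "minv (matS l) \<in> hecke l" "matT \<in> hecke l" "minv matT \<in> hecke l"
  using hecke.hecke_S[OF hecke_id] hecke.hecke_Sinv[OF hecke_id]
    hecke.hecke_T[OF hecke_id] hecke.hecke_Tinv[OF hecke_id] by auto

lemma hecke_minv: "M \<in> hecke l \<Longrightarrow> minv M \<in> hecke l"
proof (induction rule: hecke.induct)
  case hecke_id then show ?case using hecke.hecke_id[of l] by (simp add: mid_def)
next
  case (hecke_S M) then show ?case using hecke_gens by (simp add: minv_mmul hecke_mmul)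
next
  case (hecke_Sinv M) then show ?case using hecke_gens by (simp add: minv_mmul hecke_mmul del: minv.simps)
next
  case (hecke_T M) then show ?case using hecke_gens by (simp add: minv_mmul hecke_mmul del: minv.simps)
next
  case (hecke_Tinv M) then show ?case using hecke_gens by (simp add: minv_mmul hecke_mmul del: minv.simps)
qed


definition matU :: "nat \<Rightarrow> mat2" where "matU p = (lam p, -1, 1, 0)"

definition sf :: "nat \<Rightarrow> int \<Rightarrow> real" where
  "sf p j = sin (real_of_int j * (pi / real p)) / sin (pi / real p)"

lemma theta_facts:
  assumes "p \<ge> 3"
  shows "0 < pi / real p" "pi / real p \<le> pi / 3" "sin (pi / real p) > 0"
proof -
  show "0 < pi / real p" using assms by simp
  have "real p \<ge> 3" using assms by simp
  then show "pi / real p \<le> pi / 3" by (intro divide_left_mono) auto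
  then show "sin (pi / real p) > 0" using assms
    by (intro sin_gt_zero) (auto simp: pi_gt_zero intro: order.strict_trans1[of _ "pi/3"])
qed

lemma sf_rec:
  assumes "p \<ge> 3"
  shows "lam p * sf p (j + 1) = sf p (j + 2) + sf p j"
proof -
  define t where "t = pi / real p"
  have s: "sin t \<noteq> 0" using theta_facts[OF assms] t_def by simp
  have "2 * cos t * sin ((real_of_int j + 1) * t) = sin ((real_of_int j + 2) * t) + sin (real_of_int j * t)"
  proof -
    have a: "(real_of_int j + 2) * t = (real_of_int j + 1) * t + t" by (simp add: algebra_simps)
    have b: "real_of_int j * t = (real_of_int j + 1) * t - t" by (simp add: algebra_simps)
    show ?thesis unfolding a b sin_add sin_diff by (simp add: algebra_simps)
  qed
  then show ?thesis unfolding lam_def sf_def t_def[symmetric] using s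
    by (simp add: field_simps)
qed

lemma matU_pow:
  assumes "p \<ge> 3"
  shows "mpow_nat (matU p) k = (sf p (int k + 1), - sf p (int k), sf p (int k), - sf p (int k - 1))"
proof (induction k)
  case 0
  have "sin (pi / real p) > 0" using theta_facts[OF assms] by simp
  then show ?case by (simp add: mid_def sf_def)
next
  case (Suc k)
  have r1: "lam p * sf p (int k + 1) - sf p (int k) = sf p (int k + 2)"
    using sf_rec[OF assms, of "int k"] by simp
  have r2: "lam p * sf p (int k) - sf p (int k - 1) = sf p (int k + 1)"
    using sf_rec[OF assms, of "int k - 1"] by (simp add: ac_simps)
  have "mpow_nat (matU p) (Suc k) = mmul (matU p) (mpow_nat (matU p) k)" by simp
  also have "\<dots> = mmul (matU p) (sf p (int k + 1), - sf p (int k), sf p (int k), - sf p (int k - 1))"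
    using Suc by simp
  also have "\<dots> = (sf p (int (Suc k) + 1), - sf p (int (Suc k)), sf p (int (Suc k)), - sf p (int (Suc k) - 1))"
    using r1 r2 by (simp add: matU_def algebra_simps)
  finally show ?case .
qed

lemma sf_vals:
  assumes "p \<ge> 3"
  shows "sf p 0 = 0" "sf p 1 = 1" "sf p (int p) = 0" "sf p (int p - 1) = 1"
    "sf p (int p + 1) = -1" "sf p (int p - 2) = lam p"
proof -
  define t where "t = pi / real p"
  have s: "sin t > 0" using theta_facts[OF assms] t_def by simp
  have pt: "real p * t = pi" using assms unfolding t_def by simp
  show "sf p 0 = 0" "sf p 1 = 1" using s by (simp_all add: sf_def t_def[symmetric])
  show "sf p (int p) = 0" by (simp add: sf_def t_def[symmetric] pt)
  have "(real p - 1) * t = pi - t" using pt by (simp add: algebra_simps)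
  then show "sf p (int p - 1) = 1" using s by (simp add: sf_def t_def[symmetric])
  have "(real p + 1) * t = pi + t" using pt by (simp add: algebra_simps)
  then show "sf p (int p + 1) = -1" using s by (simp add: sf_def t_def[symmetric])
  have "(real p - 2) * t = pi - 2 * t" using pt by (simp add: algebra_simps)
  then show "sf p (int p - 2) = lam p" using s
    by (simp add: sf_def t_def[symmetric] lam_def sin_double)
qed

lemma sf_ge1:
  assumes "p \<ge> 3" "1 \<le> j" "j \<le> int p - 1"
  shows "sf p j \<ge> 1"
proof -
  define t where "t = pi / real p"
  have s: "sin t > 0" and t0: "t > 0" using theta_facts[OF assms(1)] t_def by auto
  have pt: "real p * t = pi" using assms unfolding t_def by simp
  define x where "x = real_of_int j * t"
  have x1: "t \<le> x" unfolding x_def using assms(2) t0 by simp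
  have "real_of_int j \<le> real p - 1" using assms(3) by linarith
  then have x2: "x \<le> pi - t" unfolding x_def using t0 pt
    by (metis left_diff_distrib' mult_1 mult_right_mono order_less_imp_le)
  have "sin t \<le> sin x"
  proof (cases "x \<le> pi/2")
    case True then show ?thesis using x1 t0 by (intro sin_monotone_2pi_le) auto
  next
    case False
    have "sin x = sin (pi - x)" by simp
    moreover have "sin t \<le> sin (pi - x)" using x2 False t0 by (intro sin_monotone_2pi_le) auto
    ultimately show ?thesis by simp
  qed
  then show ?thesis using s unfolding sf_def t_def[symmetric] x_def by simp
qed

lemma sf_nonneg:
  assumes "p \<ge> 3" "0 \<le> j" "j \<le> int p"
  shows "sf p j = 0 \<or> sf p j \<ge> 1"
  using sf_ge1[OF assms(1)] sf_vals[OF assms(1)] assms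
  by (cases "j = 0"; cases "j = int p") auto

lemma matU_pow_p: "p \<ge> 3 \<Longrightarrow> mpow_nat (matU p) p = mneg mid"
  using matU_pow[of p p] sf_vals[of p] by (simp add: mid_def)

lemma matU_pow_pm1: "p \<ge> 3 \<Longrightarrow> mpow_nat (matU p) (p - 1) = (0, -1, 1, - lam p)"
  using matU_pow[of p "p - 1"] sf_vals[of p] by (simp add: of_nat_diff)

lemma mpow_nat_Suc': "mpow_nat M (Suc n) = mmul (mpow_nat M n) M"
proof (induction n)
  case 0 then show ?case by simp
next
  case (Suc n)
  have "mpow_nat M (Suc (Suc n)) = mmul M (mpow_nat M (Suc n))" by simp
  also have "\<dots> = mmul M (mmul (mpow_nat M n) M)" using Suc by simp
  also have "\<dots> = mmul (mpow_nat M (Suc n)) M" by (simp add: mmul_assoc)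
  finally show ?case .
qed


fun brow :: "mat2 \<Rightarrow> real \<times> real" where "brow (a,b,c,d) = (c,d)"

definition Spec :: "real \<times> real \<Rightarrow> bool" where
  "Spec v \<longleftrightarrow> (fst v = 0 \<and> \<bar>snd v\<bar> = 1) \<or> (snd v = 0 \<and> \<bar>fst v\<bar> = 1)"
definition InvP :: "real \<times> real \<Rightarrow> bool" where
  "InvP v \<longleftrightarrow> fst v * snd v > 0 \<and> \<bar>fst v\<bar> \<ge> 1 \<and> \<bar>snd v\<bar> \<ge> 1"
definition InvN :: "real \<times> real \<Rightarrow> bool" where
  "InvN v \<longleftrightarrow> fst v * snd v < 0 \<and> \<bar>fst v\<bar> \<ge> 1 \<and> \<bar>snd v\<bar> \<ge> 1"

lemma absge1_mult: "\<bar>x\<bar> \<ge> 1 \<Longrightarrow> (B::real) \<ge> 1 \<Longrightarrow> \<bar>x * B\<bar> \<ge> 1"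
  by (simp add: abs_mult) (metis mult_mono' abs_ge_zero mult_1 order.trans zero_le_one)

lemma step_U_abstract:
  fixes c d A B C :: real
  assumes A: "A = 0 \<or> A \<ge> 1" and C: "C = 0 \<or> C \<ge> 1" and B: "B \<ge> 1"
    and AB: "A = 0 \<Longrightarrow> B = 1" and CB: "C = 0 \<Longrightarrow> B = 1"
    and v: "Spec (c,d) \<or> InvP (c,d)"
  shows "Spec (c*A + d*B, - c*B - d*C) \<or> InvN (c*A + d*B, - c*B - d*C)"
  using v
proof (elim disjE)
  assume "Spec (c,d)"
  then consider "c = 0" "\<bar>d\<bar> = 1" | "d = 0" "\<bar>c\<bar> = 1" unfolding Spec_def by auto
  then show ?thesis
  proof cases
    case 1
    show ?thesis
    proof (cases "C = 0")
      case True then show ?thesis using 1 CB by (simp add: Spec_def)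
    next
      case False
      then have "C \<ge> 1" using C by simp
      moreover have "d*d > 0" using 1 by (cases "d > 0") (auto simp: mult_neg_neg)
      ultimately show ?thesis using 1 B absge1_mult[of d B] absge1_mult[of "-d" C]
        by (simp add: InvN_def) (smt (verit) mult_pos_pos mult.assoc mult.commute)
    qed
  next
    case 2
    show ?thesis
    proof (cases "A = 0")
      case True then show ?thesis using 2 AB by (simp add: Spec_def)
    next
      case False
      then have "A \<ge> 1" using A by simp
      moreover have "c*c > 0" using 2 by (cases "c > 0") (auto simp: mult_neg_neg)
      ultimately show ?thesis using 2 B absge1_mult[of c A] absge1_mult[of "-c" B]
        by (simp add: InvN_def) (smt (verit) mult_pos_pos mult.assoc mult.commute)
    qed
  qed
next
  assume P: "InvP (c,d)"
  then have cd: "c*d > 0" "\<bar>c\<bar> \<ge> 1" "\<bar>d\<bar> \<ge> 1" unfolding InvP_def by auto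
  have A0: "A \<ge> 0" and C0: "C \<ge> 0" using A C by auto
  consider "c > 0" "d > 0" | "c < 0" "d < 0" using cd(1)
    by (metis mult_pos_neg mult_neg_pos linorder_neqE_linordered_idom mult_zero_left mult_zero_right order_less_asym)
  then show ?thesis
  proof cases
    case 1
    have e1: "c*A + d*B \<ge> d*B" using 1 A0 by simp
    have e2: "d*B \<ge> 1" using 1 cd B absge1_mult[of d B] by simp
    have e3: "c*B + d*C \<ge> c*B" using 1 C0 by simp
    have e4: "c*B \<ge> 1" using 1 cd B absge1_mult[of c B] by simp
    have "(c*A + d*B) * (- c*B - d*C) < 0"
      using e1 e2 e3 e4 by (simp add: mult_pos_neg)
    then show ?thesis using e1 e2 e3 e4 by (simp add: InvN_def)
  next
    case 2
    have e1: "c*A + d*B \<le> d*B" using 2 A0 by (simp add: mult_nonpos_nonneg)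
    have e2: "d*B \<le> -1" using 2 cd B absge1_mult[of d B] by (simp add: abs_mult)
    have e3: "c*B + d*C \<le> c*B" using 2 C0 by (simp add: mult_nonpos_nonneg)
    have e4: "c*B \<le> -1" using 2 cd B absge1_mult[of c B] by (simp add: abs_mult)
    have "(c*A + d*B) * (- c*B - d*C) < 0"
      using e1 e2 e3 e4 by (simp add: mult_neg_pos)
    then show ?thesis using e1 e2 e3 e4 by (simp add: InvN_def)
  qed
qed


lemma step_U:
  assumes p: "p \<ge> 3" and k: "1 \<le> k" "k < p" and v: "Spec (brow M) \<or> InvP (brow M)"
  shows "Spec (brow (mmul M (mpow_nat (matU p) k))) \<or> InvN (brow (mmul M (mpow_nat (matU p) k)))"
proof -
  obtain a b c d where M: "M = (a,b,c,d)" by (cases M)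
  define A where "A = sf p (int k + 1)"
  define B where "B = sf p (int k)"
  define C where "C = sf p (int k - 1)"
  have A: "A = 0 \<or> A \<ge> 1" unfolding A_def using k by (intro sf_nonneg[OF p]) auto
  have C: "C = 0 \<or> C \<ge> 1" unfolding C_def using k by (intro sf_nonneg[OF p]) auto
  have B: "B \<ge> 1" unfolding B_def using k by (intro sf_ge1[OF p]) auto
  have AB: "B = 1" if "A = 0"
  proof -
    have "\<not> (int k + 1 \<le> int p - 1)" using sf_ge1[OF p, of "int k + 1"] that A_def by auto
    then have "int k = int p - 1" using k by auto
    then show ?thesis using sf_vals[OF p] B_def by simp
  qed
  have CB: "B = 1" if "C = 0"
  proof -
    have "\<not> (1 \<le> int k - 1)"
    proof
      assume h: "1 \<le> int k - 1"
      have "sf p (int k - 1) \<ge> 1" by (rule sf_ge1[OF p h]) (use k in simp)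
      then show False using that C_def by simp
    qed
    moreover have "int k \<ge> 1" using k by simp
    ultimately have "int k = 1" by linarith
    then show ?thesis using sf_vals[OF p] B_def by simp
  qed
  have "brow (mmul M (mpow_nat (matU p) k)) = (c*A + d*B, - c*B - d*C)"
    unfolding M matU_pow[OF p] A_def B_def C_def by (simp add: algebra_simps)
  moreover have "Spec (c,d) \<or> InvP (c,d)" using v M by simp
  ultimately show ?thesis using step_U_abstract[OF A C B AB CB] by simp
qed

lemma step_T:
  assumes "Spec (brow M) \<or> InvN (brow M)"
  shows "Spec (brow (mmul M matT)) \<or> InvP (brow (mmul M matT))"
  using assms by (cases M) (auto simp: matT_def Spec_def InvP_def InvN_def algebra_simps)

inductive_set RW :: "nat \<Rightarrow> (mat2 \<times> nat) set" for p where
  rw0: "(mid, 0) \<in> RW p"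
| rwT: "(M, s) \<in> RW p \<Longrightarrow> s \<noteq> 1 \<Longrightarrow> (mmul M matT, 1) \<in> RW p"
| rwU: "(M, s) \<in> RW p \<Longrightarrow> s \<noteq> 2 \<Longrightarrow> 1 \<le> k \<Longrightarrow> k < p \<Longrightarrow> (mmul M (mpow_nat (matU p) k), 2) \<in> RW p"

lemma RW_inv:
  assumes "(M, s) \<in> RW p" "p \<ge> 3"
  shows "(s = 0 \<and> M = mid) \<or> (s = 1 \<and> (Spec (brow M) \<or> InvP (brow M)))
       \<or> (s = 2 \<and> (Spec (brow M) \<or> InvN (brow M)))"
  using assms(1)
proof (induction rule: RW.induct)
  case rw0 then show ?case by simp
next
  case (rwT M s)
  then have "Spec (brow M) \<or> InvN (brow M)" by (auto simp: mid_def Spec_def)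
  then show ?case using step_T by blast
next
  case (rwU M s k)
  then have "Spec (brow M) \<or> InvP (brow M)" by (auto simp: mid_def Spec_def)
  then show ?case using step_U[OF assms(2) rwU.hyps(3,4)] by blast
qed

definition HH :: "nat \<Rightarrow> mat2 set" where
  "HH p = {M. \<exists>s. (M, s) \<in> RW p \<or> (mneg M, s) \<in> RW p}"

lemma HH_mneg: "M \<in> HH p \<Longrightarrow> mneg M \<in> HH p"
  unfolding HH_def by auto

lemma matT_sq: "mmul matT matT = mneg mid"
  by (simp add: matT_def mid_def)

lemma RW_T: "(M, s) \<in> RW p \<Longrightarrow> mmul M matT \<in> HH p"
proof (cases "s = 1")
  case False
  assume "(M, s) \<in> RW p"
  then show ?thesis using rwT False unfolding HH_def by blast
next
  case True
  assume "(M, s) \<in> RW p"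
  then obtain M' s' where "M = mmul M' matT" "(M', s') \<in> RW p"
    using True by (cases rule: RW.cases) auto
  then have "mneg (mmul M matT) = M'" by (simp add: mmul_assoc matT_sq)
  then show ?thesis using \<open>(M', s') \<in> RW p\<close> unfolding HH_def by auto
qed

lemma RW_U: "(M, s) \<in> RW p \<Longrightarrow> p \<ge> 3 \<Longrightarrow> mmul M (matU p) \<in> HH p"
proof (cases "s = 2")
  case False
  assume "(M, s) \<in> RW p" "p \<ge> 3"
  then have "(mmul M (mpow_nat (matU p) 1), 2) \<in> RW p"
    by (intro rwU[of M s]) (use False in auto)
  then show ?thesis unfolding HH_def by auto
next
  case True
  assume a: "(M, s) \<in> RW p" "p \<ge> 3"
  then obtain M' s' k where M: "M = mmul M' (mpow_nat (matU p) k)" "(M', s') \<in> RW p" "s' \<noteq> 2"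
    "1 \<le> k" "k < p"
    using True by (cases rule: RW.cases) auto
  have e: "mmul M (matU p) = mmul M' (mpow_nat (matU p) (Suc k))"
    using M(1) by (simp add: mmul_assoc mpow_nat_Suc' del: mpow_nat.simps)
  show ?thesis
  proof (cases "Suc k < p")
    case True
    then have "(mmul M' (mpow_nat (matU p) (Suc k)), 2) \<in> RW p"
      using rwU[OF M(2) M(3), of "Suc k"] by simp
    then show ?thesis using e unfolding HH_def by auto
  next
    case False
    then have "Suc k = p" using M(5) by simp
    then have "mneg (mmul M (matU p)) = M'" using e matU_pow_p[OF a(2)] by simp
    then show ?thesis using M(2) unfolding HH_def by auto
  qed
qed

lemma HH_T: "M \<in> HH p \<Longrightarrow> mmul M matT \<in> HH p"
  unfolding HH_def using RW_T HH_mneg unfolding HH_def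
  by (smt (verit) mem_Collect_eq mmul_mneg(2) mneg_mneg)

lemma HH_U: "M \<in> HH p \<Longrightarrow> p \<ge> 3 \<Longrightarrow> mmul M (matU p) \<in> HH p"
  unfolding HH_def using RW_U HH_mneg unfolding HH_def
  by (smt (verit) mem_Collect_eq mmul_mneg(2) mneg_mneg)

lemma HH_Upow: "M \<in> HH p \<Longrightarrow> p \<ge> 3 \<Longrightarrow> mmul M (mpow_nat (matU p) n) \<in> HH p"
proof (induction n)
  case 0 then show ?case by simp
next
  case (Suc n)
  then show ?case using HH_U[of "mmul M (mpow_nat (matU p) n)" p]
    by (simp add: mpow_nat_Suc' mmul_assoc del: mpow_nat.simps)
qed

lemma matS_eq: "matS (lam p) = mneg (mmul (matU p) matT)"
  by (simp add: matS_def matU_def matT_def)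

lemma matSinv_eq: "p \<ge> 3 \<Longrightarrow> minv (matS (lam p)) = mneg (mmul matT (mpow_nat (matU p) (p - 1)))"
  using matU_pow_pm1[of p] by (simp add: matS_def matT_def)

lemma hecke_HH: "M \<in> hecke (lam p) \<Longrightarrow> p \<ge> 3 \<Longrightarrow> M \<in> HH p"
proof (induction M rule: hecke.induct)
  case hecke_id then show ?case unfolding HH_def using rw0 by auto
next
  case (hecke_S M)
  then show ?case unfolding matS_eq
    using HH_mneg HH_T HH_U by (simp add: mmul_assoc[symmetric])
next
  case (hecke_Sinv M)
  then show ?case unfolding matSinv_eq[OF hecke_Sinv.prems]
    using HH_mneg HH_T HH_Upow by (simp add: mmul_assoc[symmetric] del: mpow_nat.simps)
next
  case (hecke_T M) then show ?case using HH_T by simp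
next
  case (hecke_Tinv M)
  have "minv matT = mneg matT" by (simp add: matT_def)
  then show ?case using hecke_Tinv HH_T HH_mneg by simp
qed

lemma hecke_no_ut:
  assumes "M \<in> hecke (lam p)" "p \<ge> 3" "mc M = 0"
  shows "\<not> is_hyperbolic M"
proof -
  obtain a b c d where M: "M = (a,b,c,d)" by (cases M)
  have c: "c = 0" using assms M by simp
  have det: "a*d = 1" using hecke_det[OF assms(1)] M c by simp
  have "M \<in> HH p" using hecke_HH assms by blast
  then obtain s where "(M, s) \<in> RW p \<or> (mneg M, s) \<in> RW p" unfolding HH_def by auto
  then have "\<bar>d\<bar> = 1"
  proof
    assume "(M, s) \<in> RW p"
    from RW_inv[OF this assms(2)] show ?thesis using M c
      by (auto simp: Spec_def InvP_def InvN_def mid_def)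
  next
    assume "(mneg M, s) \<in> RW p"
    from RW_inv[OF this assms(2)] show ?thesis using M c
      by (auto simp: Spec_def InvP_def InvN_def mid_def)
  qed
  then have "d = 1 \<or> d = -1" by auto
  then have "a = d" using det by auto
  then show ?thesis using M \<open>d = 1 \<or> d = -1\<close> by auto
qed


fun mv :: "mat2 \<Rightarrow> real \<times> real \<Rightarrow> real \<times> real" where
  "mv (a,b,c,d) (x,y) = (a*x + b*y, c*x + d*y)"

lemma mv_mmul: "mv (mmul A B) v = mv A (mv B v)"
  by (cases A; cases B; cases v) (simp add: algebra_simps)

lemma mv_mid [simp]: "mv mid v = v" by (cases v) (simp add: mid_def)

lemma mv_scale: "mv A (r*x, r*y) = (r * fst (mv A (x,y)), r * snd (mv A (x,y)))"
  by (cases A) (simp add: algebra_simps)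

lemma fixes_iff: "fixes_pt N x \<longleftrightarrow> (\<exists>e. e \<noteq> 0 \<and> mv N (x,1) = (e*x, e))"
  by (cases N) (auto simp: field_simps)

definition mconj :: "mat2 \<Rightarrow> mat2 \<Rightarrow> mat2" where
  "mconj V X = mmul (minv V) (mmul X V)"

lemma cancel1: "mdet V = 1 \<Longrightarrow> mmul V (mmul (minv V) X) = X"
  by (simp add: mmul_assoc[symmetric] mmul_minv)
lemma cancel2: "mdet V = 1 \<Longrightarrow> mmul (minv V) (mmul V X) = X"
  by (simp add: mmul_assoc[symmetric] mmul_minv)

lemma conj_mmul: "mdet V = 1 \<Longrightarrow> mconj V (mmul A B) = mmul (mconj V A) (mconj V B)"
  unfolding mconj_def by (simp add: mmul_assoc cancel1)

lemma conj_mid: "mdet V = 1 \<Longrightarrow> mconj V mid = mid"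
  unfolding mconj_def by (simp add: mmul_minv)

lemma conj_mneg [simp]: "mconj V (mneg X) = mneg (mconj V X)"
  unfolding mconj_def by simp

lemma conj_minv: "mconj V (minv X) = minv (mconj V X)"
  unfolding mconj_def by (simp add: minv_mmul mmul_assoc)

lemma conj_pow_nat: "mdet V = 1 \<Longrightarrow> mpow_nat (mconj V M) n = mconj V (mpow_nat M n)"
  by (induction n) (simp_all add: conj_mid conj_mmul)

lemma conj_pow: "mdet V = 1 \<Longrightarrow> mpow (mconj V M) k = mconj V (mpow M k)"
  unfolding mpow_def by (simp add: conj_pow_nat conj_minv[symmetric])

lemma conj_conj: "mdet V = 1 \<Longrightarrow> mconj V (mconj (minv V) X) = X"
  unfolding mconj_def by (simp add: mmul_assoc cancel2 mmul_minv)

lemma mtr_conj: "mtr (mconj V X) = mdet V * mtr X"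
  unfolding mconj_def by (cases V; cases X) (simp add: algebra_simps)

lemma hyp_iff: "is_hyperbolic M \<longleftrightarrow> \<bar>mtr M\<bar> > 2" by (cases M) simp

lemma bqf_conj: "mconj V (a,b,c,d) = (a',b',c',d') \<Longrightarrow> bqf_act (c, d - a, -b) V = (c', d' - a', -b')"
  unfolding mconj_def by (cases V) (auto simp: algebra_simps power2_eq_square)

lemma mc_pow_nat: "mc M = 0 \<Longrightarrow> mc (mpow_nat M n) = 0"
proof (induction n)
  case 0 then show ?case by (simp add: mid_def)
next
  case (Suc n)
  then show ?case by (cases M; cases "mpow_nat M n") simp
qed

lemma mc_minv: "mc M = 0 \<Longrightarrow> mc (minv M) = 0" by (cases M) simp
lemma mc_mneg [simp]: "mc (mneg M) = - mc M" by (cases M) simp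

lemma mc_pow: "mc M = 0 \<Longrightarrow> mc (mpow M k) = 0"
  unfolding mpow_def using mc_pow_nat mc_minv by auto

lemma hecke_conj: "V \<in> hecke l \<Longrightarrow> X \<in> hecke l \<Longrightarrow> mconj V X \<in> hecke l"
  unfolding mconj_def by (intro hecke_mmul hecke_minv) auto

lemma eigen_conj:
  assumes "mdet V = 1" "mv X (x,1) = (e*x, e)" "mv (minv V) (x,1) = (u,w)"
  shows "mv (mconj V X) (u,w) = (e*u, e*w)"
proof -
  have "mv V (u,w) = (x,1)" using assms(3)[symmetric]
    by (simp add: mv_mmul[symmetric] mmul_minv assms(1))
  then have "mv (mconj V X) (u,w) = mv (minv V) (e*x, e*1)"
    unfolding mconj_def by (simp add: mv_mmul assms(2))
  also have "\<dots> = (e*u, e*w)" unfolding mv_scale assms(3) by simp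
  finally show ?thesis .
qed

lemma fixes_conj:
  assumes "mdet V = 1" "fixes_pt X x" "mv (minv V) (x,1) = (u,w)" "w \<noteq> 0"
  shows "fixes_pt (mconj V X) (u/w)"
proof -
  obtain e where e: "e \<noteq> 0" "mv X (x,1) = (e*x, e)" using assms(2) fixes_iff by blast
  have "mv (mconj V X) (u,w) = (e*u, e*w)" by (rule eigen_conj[OF assms(1) e(2) assms(3)])
  then have "mv (mconj V X) ((1/w)*u, (1/w)*w) = ((1/w)*(e*u), (1/w)*(e*w))"
    unfolding mv_scale by simp
  then have "mv (mconj V X) (u/w, 1) = (e*(u/w), e)" using assms(4) by simp
  then show ?thesis using e(1) fixes_iff by blast
qed


lemma one_dir:
  assumes p: "p \<ge> 3" and hyp: "is_hyp_BQF (lam p) Q" and lamQ': "is_lam_BQF (lam p) Q'"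
    and V: "V \<in> hecke (lam p)" and Q': "Q' = bqf_act Q V"
  shows "is_hyp_BQF (lam p) Q'"
proof -
  let ?l = "lam p"
  from hyp obtain \<alpha> a b c d where hfp: "hyp_fixed_point ?l \<alpha>" and sg: "stab_generator ?l \<alpha> (a,b,c,d)"
    and c0: "c \<noteq> 0" and aeq: "\<alpha> = (a - d + sqrt ((a+d)^2 - 4)) / (2*c)" and Qeq: "Q = (c, d - a, -b)"
    unfolding is_hyp_BQF_def by blast
  from hfp obtain N where N: "N \<in> hecke ?l" "is_hyperbolic N" "fixes_pt N \<alpha>"
    unfolding hyp_fixed_point_def by blast
  have Mh: "(a,b,c,d) \<in> hecke ?l" and Mfix: "fixes_pt (a,b,c,d) \<alpha>"
    and gen: "\<And>N. N \<in> hecke ?l \<Longrightarrow> fixes_pt N \<alpha> \<Longrightarrow> \<exists>k::int. N = mpow (a,b,c,d) k \<or> N = mneg (mpow (a,b,c,d) k)"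
    using sg unfolding stab_generator_def by auto
  have dV: "mdet V = 1" using hecke_det[OF V] .
  obtain a' b' c' d' where M': "mconj V (a,b,c,d) = (a',b',c',d')" by (cases "mconj V (a,b,c,d)")
  have M'h: "(a',b',c',d') \<in> hecke ?l" using hecke_conj[OF V Mh] M' by simp
  have tr: "a' + d' = a + d" using mtr_conj[of V "(a,b,c,d)"] M' dV by simp
  have Qc: "Q' = (c', d' - a', -b')" using Q' Qeq bqf_conj[OF M'] by simp
  obtain kN where kN: "N = mpow (a,b,c,d) kN \<or> N = mneg (mpow (a,b,c,d) kN)" using gen N by blast
  have c'0: "c' \<noteq> 0"
  proof
    assume "c' = 0"
    then have "mc (mconj V (a,b,c,d)) = 0" using M' by simp
    then have "mc (mpow (mconj V (a,b,c,d)) kN) = 0" by (rule mc_pow)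
    then have "mc (mconj V N) = 0" using kN conj_pow[OF dV] mc_mneg by auto
    moreover have "mconj V N \<in> hecke ?l" using hecke_conj[OF V N(1)] .
    moreover have "is_hyperbolic (mconj V N)" using N(2) mtr_conj[of V N] dV hyp_iff by simp
    ultimately show False using hecke_no_ut p by blast
  qed
  define e where "e = c*\<alpha> + d"
  have e: "e \<noteq> 0" "mv (a,b,c,d) (\<alpha>,1) = (e*\<alpha>, e)" using Mfix unfolding e_def
    by (auto simp: field_simps)
  obtain u w where uw: "mv (minv V) (\<alpha>,1) = (u,w)" by (cases "mv (minv V) (\<alpha>,1)")
  have Vuw: "mv V (u,w) = (\<alpha>,1)" using uw[symmetric]
    by (simp add: mv_mmul[symmetric] mmul_minv dV)
  have eig: "mv (a',b',c',d') (u,w) = (e*u, e*w)" using eigen_conj[OF dV e(2) uw] M' by simp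
  have w0: "w \<noteq> 0"
  proof
    assume w: "w = 0"
    then have "u \<noteq> 0" using Vuw by (cases V) auto
    moreover have "c' * u = 0" using eig w by simp
    ultimately show False using c'0 by simp
  qed
  define \<alpha>' where "\<alpha>' = u / w"
  have fixM': "fixes_pt (a',b',c',d') \<alpha>'" using fixes_conj[OF dV Mfix uw w0] M' \<alpha>'_def by simp
  have ce: "c' * \<alpha>' + d' = e"
  proof -
    have "mv (a',b',c',d') ((1/w)*u, (1/w)*w) = ((1/w)*(e*u), (1/w)*(e*w))"
      unfolding mv_scale eig by simp
    then show ?thesis using w0 unfolding \<alpha>'_def by (simp add: field_simps)
  qed
  have ae: "e = (a + d + sqrt ((a+d)^2 - 4)) / 2"
    unfolding e_def aeq using c0 by (simp add: field_simps)
  have a'eq: "\<alpha>' = (a' - d' + sqrt ((a'+d')^2 - 4)) / (2*c')"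
    using ce ae tr c'0 by (simp add: field_simps)
  have hfp': "hyp_fixed_point ?l \<alpha>'"
    unfolding hyp_fixed_point_def
  proof (intro bexI conjI)
    show "mconj V N \<in> hecke ?l" using hecke_conj[OF V N(1)] .
    show "is_hyperbolic (mconj V N)" using N(2) mtr_conj[of V N] dV hyp_iff by simp
    show "fixes_pt (mconj V N) \<alpha>'" using fixes_conj[OF dV N(3) uw w0] \<alpha>'_def by simp
  qed
  have sg': "stab_generator ?l \<alpha>' (a',b',c',d')"
    unfolding stab_generator_def
  proof (intro conjI ballI impI)
    show "(a',b',c',d') \<in> hecke ?l" by fact
    show "fixes_pt (a',b',c',d') \<alpha>'" by fact
    fix N' assume N': "N' \<in> hecke ?l" "fixes_pt N' \<alpha>'"
    have dVi: "mdet (minv V) = 1" using dV by simp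
    have arg: "(\<alpha>', 1::real) = ((1/w)*u, (1/w)*w)" using w0 \<alpha>'_def by simp
    have "mv (minv (minv V)) (\<alpha>', 1) = mv V ((1/w)*u, (1/w)*w)" using arg by simp
    also have "\<dots> = ((1/w)*\<alpha>, (1/w)*1)" unfolding mv_scale using Vuw by simp
    finally have uw2: "mv (minv (minv V)) (\<alpha>', 1) = (\<alpha>/w, 1/w)" by simp
    have "fixes_pt (mconj (minv V) N') ((\<alpha>/w)/(1/w))"
      using fixes_conj[OF dVi N'(2) uw2] w0 by simp
    then have fx: "fixes_pt (mconj (minv V) N') \<alpha>" using w0 by simp
    have "mconj (minv V) N' \<in> hecke ?l" using hecke_conj[OF hecke_minv[OF V] N'(1)] .
    then obtain k where k: "mconj (minv V) N' = mpow (a,b,c,d) k \<or> mconj (minv V) N' = mneg (mpow (a,b,c,d) k)"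
      using gen fx by blast
    have "N' = mconj V (mconj (minv V) N')" using conj_conj[OF dV] by simp
    then have "N' = mconj V (mpow (a,b,c,d) k) \<or> N' = mneg (mconj V (mpow (a,b,c,d) k))"
      using k by auto
    then have "N' = mpow (a',b',c',d') k \<or> N' = mneg (mpow (a',b',c',d') k)"
      using conj_pow[OF dV, of "(a,b,c,d)" k] M' by simp
    then show "\<exists>k::int. N' = mpow (a',b',c',d') k \<or> N' = mneg (mpow (a',b',c',d') k)" by blast
  qed
  show ?thesis unfolding is_hyp_BQF_def
    using lamQ' hfp' sg' c'0 a'eq Qc by blast
qed

lemma bqf_act_mmul: "bqf_act (bqf_act Q V) W = bqf_act Q (mmul V W)"
  by (cases Q; cases V; cases W) (simp add: algebra_simps power2_eq_square)

lemma bqf_act_mid: "bqf_act Q mid = Q"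
  by (cases Q) (simp add: mid_def)

theorem corollary3p4:
  fixes p :: nat and Q Q' :: bqf
  assumes "p \<ge> 3"
    and "is_lam_BQF (lam p) Q" and "is_lam_BQF (lam p) Q'"
    and "equiv_bqf (lam p) Q Q'"
  shows "is_hyp_BQF (lam p) Q \<longleftrightarrow> is_hyp_BQF (lam p) Q'"
proof -
  obtain V where V: "V \<in> hecke (lam p)" "Q' = bqf_act Q V"
    using assms(4) unfolding equiv_bqf_def by blast
  have Vi: "minv V \<in> hecke (lam p)" using hecke_minv[OF V(1)] .
  have "Q = bqf_act Q' (minv V)"
    using V(2) bqf_act_mmul mmul_minv(1)[OF hecke_det[OF V(1)]] bqf_act_mid by simp
  then show ?thesis using one_dir[OF assms(1) _ assms(3) V] one_dir[OF assms(1) _ assms(2) Vi]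
    by blast
qed

end
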